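(* Let $\lambda$ be a composition of $n\ge 2$. For each $1\le k\le n$ and each $\sigma\in\Omega_\lambda$, almost surely $$\sigma_{\tilde U_\lambda}\big(\xi_1(\sigma),\dots,\xi_k(\sigma)\big)=\sigma_{\downarrow k}.$$ In particular, if $\sigma_\lambda$ is uniform on $\Omega_\lambda$, the random permutations $(\sigma_\lambda)_{\downarrow k}$ and $\sigma_{\tilde U_\lambda}(\xi^\lambda_1,\dots,\xi^\lambda_k)$ have the same law.
   Context: A composition $\lambda=(\lambda_1,\dots,\lambda_r)$ of $n$ has descent set $D_\lambda=\{\lambda_1,\lambda_1+\lambda_2,\dots,\lambda_1+\dots+\lambda_{r-1}\}$. $\Omega_\lambda=\{\sigma\in\mathfrak{S}_n: des(\sigma)=D_\lambda\}$ where $des(\sigma)=\{i:\sigma(i+1)<\sigma(i)\}$ (permutations written as words). For $\sigma\in\mathfrak{S}_n$, $\sigma_{\downarrow k}\in\mathfrak{S}_k$ is the word obtained by erasing the letters $k+1,\dots,n$. Peaks/valleys: $i\in[1,n]$ is a peak if $i\in D_\lambda\cup\{n\}$ and $i-1\notin D_\lambda$; a valley if $i\notin D_\lambda$ and $i-1\in D_\lambda\cup\{0\}$. Let $1=a_1<a_2<\dots<a_{t+1}=n$ be the peaks and valleys. The slope $\mathfrak{s}(i)=[x(i),y(i)]$ of a cell $i$ is the maximal integer subinterval of $[1,n]$ containing $i$ and no peak or valley other than $i$ itself. Averaged coordinates: given $\sigma\in\Omega_\lambda$, let $\xi_1(\sigma),\dots,\xi_n(\sigma)$ be independent, with $\xi_i(\sigma)$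 uniform on $[\frac{x(\sigma^{-1}(i))-1}{n},\frac{y(\sigma^{-1}(i))}{n}]$. With $\sigma_\lambda$ uniform on $\Omega_\lambda$, $\xi^\lambda_i=\xi_i(\sigma_\lambda)$ (the uniform variables drawn independently of $\sigma_\lambda$). Run paintbox: $\tilde U_\lambda=(\tilde U_\uparrow(\lambda),\tilde U_\downarrow(\lambda))$ with $\tilde U_\uparrow(\lambda)=\bigcup_{a_i\text{ valley}}]\frac{a_i-1}{n},\frac{a_{i+1}-1}{n}[$, $\tilde U_\downarrow(\lambda)=\bigcup_{a_i\text{ peak}}]\frac{a_i-1}{n},\frac{a_{i+1}-1}{n}[$, with the convention $a_{i+1}=n+1$ when $a_i=n$. Paintbox: for a pair $U=(U_\uparrow,U_\downarrow)$ of disjoint open subsets of $]0,1[$ and $x_1,\dots,x_k\in[0,1]$, $\sigma_U(x_1,\dots,x_k)\in\mathfrak{S}_k$ is defined by $\sigma^{-1}(i)<\sigma^{-1}(j)$ iff ($x_i,x_j$ not in a common component of $U_\uparrow$ or of $U_\downarrow$ and $x_i<x_j$) or (same component of $U_\uparrow$ and $i<j$) or (same component of $U_\downarrow$ and $j<i$). *)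

theory Defs
  imports "HOL-Probability.Probability"
begin

definition comp_descents :: "nat list \<Rightarrow> nat set" where
  "comp_descents lam = {sum_list (take j lam) | j. 1 \<le> j \<and> j < length lam}"

text \<open>Permutations of [1..n] are words (lists) w; w(i) = w ! (i-1).
  Position (inverse permutation), 1-based.\<close>
definition pos :: "nat list \<Rightarrow> nat \<Rightarrow> nat" where
  "pos w v = Suc (LEAST j. j < length w \<and> w ! j = v)"

definition perm_word :: "nat \<Rightarrow> nat list \<Rightarrow> bool" where
  "perm_word n w \<longleftrightarrow> distinct w \<and> set w = {1..n}"

definition des :: "nat list \<Rightarrow> nat set" where
  "des w = {i. 1 \<le> i \<and> i < length w \<and> w ! i < w ! (i - 1)}"

definition Omega :: "nat \<Rightarrow> nat list \<Rightarrow> nat list set" where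
  "Omega n lam = {w. perm_word n w \<and> des w = comp_descents lam}"

definition restr :: "nat \<Rightarrow> nat list \<Rightarrow> nat list" where
  "restr k w = filter (\<lambda>x. x \<le> k) w"

definition is_peak :: "nat set \<Rightarrow> nat \<Rightarrow> nat \<Rightarrow> bool" where
  "is_peak D n i \<longleftrightarrow> 1 \<le> i \<and> i \<le> n \<and> i \<in> D \<union> {n} \<and> (i - 1) \<notin> D"

definition is_valley :: "nat set \<Rightarrow> nat \<Rightarrow> nat \<Rightarrow> bool" where
  "is_valley D n i \<longleftrightarrow> 1 \<le> i \<and> i \<le> n \<and> i \<notin> D \<and> (i - 1) \<in> D \<union> {0}"

definition PV :: "nat set \<Rightarrow> nat \<Rightarrow> nat set" where
  "PV D n = {i. is_peak D n i \<or> is_valley D n i}"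

definition slope_x :: "nat set \<Rightarrow> nat \<Rightarrow> nat \<Rightarrow> nat" where
  "slope_x D n i = Min {x. 1 \<le> x \<and> x \<le> i \<and> (\<forall>j\<in>{x..i}. j \<in> PV D n \<longrightarrow> j = i)}"

definition slope_y :: "nat set \<Rightarrow> nat \<Rightarrow> nat \<Rightarrow> nat" where
  "slope_y D n i = Max {y. i \<le> y \<and> y \<le> n \<and> (\<forall>j\<in>{i..y}. j \<in> PV D n \<longrightarrow> j = i)}"

text \<open>Joint law of (xi_1(sigma),...,xi_k(sigma)): independent uniforms.\<close>
definition xi_measure :: "nat \<Rightarrow> nat list \<Rightarrow> nat list \<Rightarrow> nat \<Rightarrow> (nat \<Rightarrow> real) measure" where
  "xi_measure n lam w k =
     PiM {1..k} (\<lambda>i. uniform_measure lborel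
        {(real (slope_x (comp_descents lam) n (pos w i)) - 1) / real n ..
          real (slope_y (comp_descents lam) n (pos w i)) / real n})"

definition same_comp :: "real set \<Rightarrow> real \<Rightarrow> real \<Rightarrow> bool" where
  "same_comp S a b \<longleftrightarrow> connected_component S a b"

definition pb_before :: "real set \<times> real set \<Rightarrow> (nat \<Rightarrow> real) \<Rightarrow> nat \<Rightarrow> nat \<Rightarrow> bool" where
  "pb_before U x i j \<longleftrightarrow>
     (\<not> same_comp (fst U) (x i) (x j) \<and> \<not> same_comp (snd U) (x i) (x j) \<and> x i < x j)
     \<or> (same_comp (fst U) (x i) (x j) \<and> i < j)
     \<or> (same_comp (snd U) (x i) (x j) \<and> j < i)"

definition paintbox :: "real set \<times> real set \<Rightarrow> nat \<Rightarrow> (nat \<Rightarrow> real) \<Rightarrow> nat list" where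
  "paintbox U k x = (THE w. perm_word k w \<and>
      (\<forall>i\<in>{1..k}. \<forall>j\<in>{1..k}. pos w i < pos w j \<longleftrightarrow> pb_before U x i j))"

definition next_pv :: "nat set \<Rightarrow> nat \<Rightarrow> nat \<Rightarrow> nat" where
  "next_pv D n a = (if a = n then n + 1 else Min {b \<in> PV D n. a < b})"

definition run_paintbox :: "nat list \<Rightarrow> nat \<Rightarrow> real set \<times> real set" where
  "run_paintbox lam n =
    (let D = comp_descents lam in
     (\<Union>a\<in>{a. is_valley D n a}. {(real a - 1) / real n <..< (real (next_pv D n a) - 1) / real n},
      \<Union>a\<in>{a. is_peak D n a}. {(real a - 1) / real n <..< (real (next_pv D n a) - 1) / real n}))"

end

theory Submission
  imports Defs
begin


lemma pos_nth:
  assumes "distinct ys" "t < length ys"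
  shows "pos ys (ys ! t) = Suc t"
  unfolding pos_def
proof -
  have "(LEAST j. j < length ys \<and> ys ! j = ys ! t) = t"
    by (rule Least_equality) (use assms in \<open>auto simp: nth_eq_iff_index_eq\<close>)
  then show "Suc (LEAST j. j < length ys \<and> ys ! j = ys ! t) = Suc t" by simp
qed

lemma pos_in:
  assumes "distinct ys" "i \<in> set ys"
  shows "pos ys i \<ge> 1 \<and> pos ys i \<le> length ys \<and> ys ! (pos ys i - 1) = i"
proof -
  obtain t where t: "t < length ys" "ys ! t = i" using assms(2) by (auto simp: in_set_conv_nth)
  show ?thesis using pos_nth[OF assms(1) t(1)] t by auto
qed

lemma pos_inj:
  assumes "distinct ys" "i \<in> set ys" "j \<in> set ys" "pos ys i = pos ys j"
  shows "i = j"
  using pos_in[OF assms(1,2)] pos_in[OF assms(1,3)] assms(4) by metis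

lemma sorted_pos: "distinct ys \<Longrightarrow> sorted_wrt (\<lambda>a b. pos ys a < pos ys b) ys"
  by (auto simp: sorted_wrt_iff_nth_less pos_nth)

lemma pos_sorted:
  assumes "distinct ys" "sorted_wrt R ys" "\<And>a b. R a b \<Longrightarrow> \<not> R b a"
    "i \<in> set ys" "j \<in> set ys"
  shows "pos ys i < pos ys j \<longleftrightarrow> R i j"
proof -
  obtain a where a: "a < length ys" "ys ! a = i" using assms(4) by (auto simp: in_set_conv_nth)
  obtain b where b: "b < length ys" "ys ! b = j" using assms(5) by (auto simp: in_set_conv_nth)
  have pa: "pos ys i = Suc a" using pos_nth[OF assms(1) a(1)] a by simp
  have pb: "pos ys j = Suc b" using pos_nth[OF assms(1) b(1)] b by simp
  have s: "\<And>x y. x < y \<Longrightarrow> y < length ys \<Longrightarrow> R (ys!x) (ys!y)"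
    using assms(2) by (auto simp: sorted_wrt_iff_nth_less)
  show ?thesis
  proof
    assume "pos ys i < pos ys j" then show "R i j" using s[of a b] a b pa pb by auto
  next
    assume r: "R i j"
    have "a \<noteq> b" using r a b assms(3) by blast
    moreover have "\<not> b < a" using s[of b a] a b r assms(3) by blast
    ultimately show "pos ys i < pos ys j" using pa pb by auto
  qed
qed

lemma perm_word_unique:
  assumes "perm_word k w1" "perm_word k w2"
    "\<forall>i\<in>{1..k}. \<forall>j\<in>{1..k}. pos w1 i < pos w1 j \<longleftrightarrow> pos w2 i < pos w2 j"
  shows "w1 = w2"
proof -
  have d1: "distinct w1" "set w1 = {1..k}" and d2: "distinct w2" "set w2 = {1..k}"
    using assms(1,2) by (auto simp: perm_word_def)
  have s1: "sorted_wrt (\<lambda>a b. pos w2 a < pos w2 b) w1"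
    unfolding sorted_wrt_iff_nth_less
  proof (intro allI impI)
    fix i j assume ij: "i < j" "j < length w1"
    have "w1 ! i \<in> {1..k}" "w1 ! j \<in> {1..k}" using ij d1(2) nth_mem[of _ w1] by auto
    moreover have "pos w1 (w1!i) < pos w1 (w1!j)" using ij d1 by (simp add: pos_nth)
    ultimately show "pos w2 (w1 ! i) < pos w2 (w1 ! j)" using assms(3) by blast
  qed
  have s2: "sorted_wrt (\<lambda>a b. pos w2 a < pos w2 b) w2" using sorted_pos[OF d2(1)] .
  have inj: "inj_on (pos w2) {1..k}"
    using pos_inj[OF d2(1)] d2(2) by (auto simp: inj_on_def)
  have m1: "sorted (map (pos w2) w1)" "distinct (map (pos w2) w1)"
    using s1 inj d1 by (auto simp: sorted_wrt_map distinct_map elim!: sorted_wrt_mono_rel[rotated])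
  have m2: "sorted (map (pos w2) w2)" "distinct (map (pos w2) w2)"
    using s2 inj d2 by (auto simp: sorted_wrt_map distinct_map elim!: sorted_wrt_mono_rel[rotated])
  have "map (pos w2) w1 = map (pos w2) w2"
    by (rule sorted_distinct_set_unique) (use m1 m2 d1 d2 in auto)
  then show ?thesis using inj d1 d2 by (simp add: inj_on_map_eq_map)
qed

lemma restr_perm: "perm_word n w \<Longrightarrow> k \<le> n \<Longrightarrow> perm_word k (restr k w)"
  by (auto simp: perm_word_def restr_def)

lemma restr_pos:
  assumes "perm_word n w" "k \<le> n" "i \<in> {1..k}" "j \<in> {1..k}"
  shows "pos (restr k w) i < pos (restr k w) j \<longleftrightarrow> pos w i < pos w j"
proof -
  have d: "distinct w" "set w = {1..n}" using assms(1) by (auto simp: perm_word_def)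
  have "sorted_wrt (\<lambda>a b. pos w a < pos w b) (restr k w)"
    unfolding restr_def by (rule sorted_wrt_filter[OF sorted_pos[OF d(1)]])
  from pos_sorted[OF _ this] show ?thesis using d assms(2-4) by (auto simp: restr_def)
qed



fun cw :: "nat list \<Rightarrow> nat list" where
  "cw [] = []"
| "cw (a # l) = [sum_list l + 1 ..< sum_list l + a + 1] @ cw l"

lemma cw_perm: "perm_word (sum_list l) (cw l)"
proof (induction l)
  case Nil then show ?case by (simp add: perm_word_def)
next
  case (Cons a l)
  then have "distinct (cw l)" "set (cw l) = {1..sum_list l}" by (auto simp: perm_word_def)
  then show ?case by (auto simp: perm_word_def)
qed

lemma cw_len: "length (cw l) = sum_list l"
  using cw_perm[of l] by (auto simp: perm_word_def dest: distinct_card)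

lemma comp_desc_nil: "comp_descents [] = {}"
  by (auto simp: comp_descents_def)

lemma comp_desc_cons: "comp_descents (a # l) = (if l = [] then {} else insert a ((+) a ` comp_descents l))"
proof (cases "l = []")
  case True then show ?thesis by (auto simp: comp_descents_def)
next
  case False
  have "comp_descents (a # l) = insert a ((+) a ` comp_descents l)"
  proof (intro equalityI subsetI)
    fix d assume "d \<in> comp_descents (a # l)"
    then obtain j where j: "1 \<le> j" "j < Suc (length l)" "d = sum_list (take j (a # l))"
      by (auto simp: comp_descents_def)
    show "d \<in> insert a ((+) a ` comp_descents l)"
    proof (cases "j = 1")
      case True then show ?thesis using j by simp
    next
      case F: False
      then obtain j' where j': "j = Suc j'" "1 \<le> j'" using j by (cases j) auto
      then have "d = a + sum_list (take j' l)" using j by simp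
      moreover have "sum_list (take j' l) \<in> comp_descents l"
        using j j' by (auto simp: comp_descents_def)
      ultimately show ?thesis by auto
    qed
  next
    fix d assume "d \<in> insert a ((+) a ` comp_descents l)"
    then consider "d = a" | d' where "d' \<in> comp_descents l" "d = a + d'" by auto
    then show "d \<in> comp_descents (a # l)"
    proof cases
      case 1
      then have "d = sum_list (take 1 (a # l))" by simp
      then show ?thesis using False unfolding comp_descents_def by (intro CollectI exI[of _ 1]) auto
    next
      case 2
      then obtain j where j: "1 \<le> j" "j < length l" "d' = sum_list (take j l)"
        by (auto simp: comp_descents_def)
      then have "d = sum_list (take (Suc j) (a # l))" using 2 by simp
      then show ?thesis using j unfolding comp_descents_def by (intro CollectI exI[of _ "Suc j"]) auto
    qed
  qed
  then show ?thesis using False by simp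
qed

lemma des_app:
  fixes s a :: nat and xs ys :: "nat list"
  assumes a: "0 < a" and lx: "length xs = a" and nx: "\<And>i. i < a \<Longrightarrow> xs ! i = s + 1 + i"
    and ys: "length ys = s" "set ys \<subseteq> {1..s}"
  shows "des (xs @ ys) = (if s = 0 then {} else insert a ((+) a ` des ys))"
proof -
  have yb: "\<And>t. t < s \<Longrightarrow> ys ! t \<le> s" using ys nth_mem by fastforce
  have L: "length (xs @ ys) = a + s" using lx ys by simp
  have key: "i \<in> des (xs @ ys) \<longleftrightarrow> (i = a \<and> 0 < s) \<or> (\<exists>d\<in>des ys. i = a + d)" for i
  proof -
    have dy: "\<forall>d\<in>des ys. 1 \<le> d" by (auto simp: des_def)
    consider "i < a" | "i = a" | "a < i" by linarith
    then show ?thesis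
    proof cases
      case 1
      have "\<not> i \<in> des (xs @ ys)"
      proof
        assume "i \<in> des (xs @ ys)"
        then have "1 \<le> i" "(xs @ ys) ! i < (xs @ ys) ! (i - 1)" by (auto simp: des_def)
        moreover have "(xs @ ys) ! i = s + 1 + i" using 1 lx nx by (simp add: nth_append)
        moreover have "i - 1 < a" using 1 by linarith
        moreover have "(xs @ ys) ! (i - 1) = s + 1 + (i - 1)" using \<open>i - 1 < a\<close> lx nx by (simp add: nth_append)
        ultimately show False by linarith
      qed
      then show ?thesis using 1 dy by auto
    next
      case 2
      have "i \<in> des (xs @ ys) \<longleftrightarrow> 0 < s"
      proof
        assume "i \<in> des (xs @ ys)"
        then show "0 < s" using L 2 by (auto simp: des_def)
      next
        assume s0: "0 < s"
        have "(xs @ ys) ! i = ys ! 0" using 2 lx by (simp add: nth_append)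
        moreover have "(xs @ ys) ! (i - 1) = s + 1 + (a - 1)" using 2 a lx nx by (simp add: nth_append)
        moreover have "ys ! 0 \<le> s" using yb s0 by simp
        ultimately show "i \<in> des (xs @ ys)" unfolding des_def using L 2 a s0 by auto
      qed
      then show ?thesis using 2 dy by auto
    next
      case 3
      have e1: "(xs @ ys) ! i = ys ! (i - a)" using 3 lx by (simp add: nth_append)
      have "\<not> i - 1 < a" "i - 1 - a = i - a - 1" using 3 by linarith+
      then have e2: "(xs @ ys) ! (i - 1) = ys ! (i - a - 1)" using lx by (simp add: nth_append)
      have "i \<in> des (xs @ ys) \<longleftrightarrow> i - a \<in> des ys"
        unfolding des_def using e1 e2 3 L ys(1) by (auto simp: diff_diff_left)
      moreover have "i - a \<in> des ys \<longleftrightarrow> (\<exists>d\<in>des ys. i = a + d)"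
      proof
        assume "i - a \<in> des ys" then show "\<exists>d\<in>des ys. i = a + d" using 3 by (intro bexI[of _ "i - a"]) auto
      qed auto
      ultimately show ?thesis using 3 by auto
    qed
  qed
  show ?thesis
  proof (cases "s = 0")
    case True
    then have "des ys = {}" using ys(1) by (auto simp: des_def)
    then show ?thesis using key True by auto
  next
    case False
    then show ?thesis using key by auto
  qed
qed

lemma des_cw: "\<forall>p\<in>set l. 0 < p \<Longrightarrow> des (cw l) = comp_descents l"
proof (induction l)
  case Nil then show ?case by (simp add: des_def comp_desc_nil)
next
  case (Cons a l)
  have ys: "length (cw l) = sum_list l" "set (cw l) \<subseteq> {1..sum_list l}"
    using cw_perm[of l] by (auto simp: perm_word_def cw_len)
  have s0: "sum_list l = 0 \<longleftrightarrow> l = []" using Cons.prems by (cases l) auto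
  show ?case
  proof -
    have "des (cw (a # l)) = (if sum_list l = 0 then {} else insert a ((+) a ` des (cw l)))"
      unfolding cw.simps
    proof (rule des_app)
      show "0 < a" using Cons.prems by simp
      show "length [sum_list l + 1..<sum_list l + a + 1] = a" by simp
      show "\<And>i. i < a \<Longrightarrow> [sum_list l + 1..<sum_list l + a + 1] ! i = sum_list l + 1 + i"
        by (simp del: upt_Suc)
      show "length (cw l) = sum_list l" "set (cw l) \<subseteq> {1..sum_list l}" using ys by auto
    qed
    then show ?thesis using Cons s0 by (simp add: comp_desc_cons)
  qed
qed



lemma sum_list_pos_ge1: "xs \<noteq> [] \<Longrightarrow> \<forall>p\<in>set xs. (0::nat) < p \<Longrightarrow> 1 \<le> sum_list xs"
  by (cases xs) auto

locale cfg =
  fixes lam :: "nat list" and n :: nat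
  assumes ppos: "\<forall>p\<in>set lam. 0 < p" and psum: "sum_list lam = n" and n2: "2 \<le> n"
begin

abbreviation "D \<equiv> comp_descents lam"
abbreviation "P \<equiv> PV D n"
abbreviation "nx \<equiv> next_pv D n"

lemma D_sub: "d \<in> D \<Longrightarrow> 1 \<le> d \<and> d < n"
proof -
  assume "d \<in> D"
  then obtain j where j: "1 \<le> j" "j < length lam" "d = sum_list (take j lam)"
    by (auto simp: comp_descents_def)
  have "take j lam \<noteq> []" "drop j lam \<noteq> []" using j by auto
  moreover have "\<forall>p\<in>set (take j lam). 0 < p" "\<forall>p\<in>set (drop j lam). 0 < p"
    using ppos by (auto dest: in_set_takeD in_set_dropD)
  ultimately have "1 \<le> sum_list (take j lam)" "1 \<le> sum_list (drop j lam)"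
    using sum_list_pos_ge1 by blast+
  moreover have "sum_list (take j lam) + sum_list (drop j lam) = n"
    using psum by (metis append_take_drop_id sum_list_append)
  ultimately show ?thesis using j by auto
qed

lemma n_notin_D: "n \<notin> D" using D_sub by auto

lemma P_range: "a \<in> P \<Longrightarrow> 1 \<le> a \<and> a \<le> n"
  by (auto simp: PV_def is_peak_def is_valley_def)

lemma finite_P: "finite P"
  by (rule finite_subset[of _ "{1..n}"]) (auto dest: P_range)

lemma one_P: "1 \<in> P"
  using n2 D_sub[of 0] by (cases "1 \<in> D") (auto simp: PV_def is_peak_def is_valley_def)

lemma n_P: "n \<in> P"
  using n2 n_notin_D by (cases "n - 1 \<in> D") (auto simp: PV_def is_peak_def is_valley_def)

lemma not_peak_and_valley: "\<not> (is_peak D n a \<and> is_valley D n a)"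
  using n2 by (auto simp: is_peak_def is_valley_def)

lemma nx_props:
  assumes "a \<in> P"
  shows "a < nx a \<and> nx a \<le> n + 1 \<and> (nx a \<le> n \<longrightarrow> nx a \<in> P) \<and> (\<forall>b\<in>P. a < b \<longrightarrow> nx a \<le> b)"
proof (cases "a = n")
  case True then show ?thesis using P_range by (auto simp: next_pv_def)
next
  case False
  let ?S = "{b \<in> P. a < b}"
  have ne: "?S \<noteq> {}" using n_P P_range[OF assms] False by auto
  have fin: "finite ?S" using finite_P by auto
  have "nx a = Min ?S" using False by (simp add: next_pv_def)
  moreover have "Min ?S \<in> ?S" using Min_in[OF fin ne] .
  moreover have "Min ?S \<le> n" using P_range \<open>Min ?S \<in> ?S\<close> by auto
  ultimately show ?thesis using fin by auto
qed

definition lpv :: "nat \<Rightarrow> nat" where "lpv c = Max {a \<in> P. a \<le> c}"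

lemma lpv_props:
  assumes "1 \<le> c" "c \<le> n"
  shows "lpv c \<in> P \<and> lpv c \<le> c \<and> c < nx (lpv c)"
proof -
  let ?S = "{a \<in> P. a \<le> c}"
  have ne: "?S \<noteq> {}" using one_P assms by auto
  have fin: "finite ?S" using finite_P by auto
  have m: "lpv c \<in> ?S" unfolding lpv_def using Max_in[OF fin ne] .
  have "c < nx (lpv c)"
  proof (rule ccontr)
    assume "\<not> c < nx (lpv c)"
    then have "nx (lpv c) \<le> c" by simp
    moreover have "nx (lpv c) \<le> n" using calculation assms by simp
    ultimately have "nx (lpv c) \<in> ?S" using nx_props[of "lpv c"] m by auto
    then have "nx (lpv c) \<le> lpv c" unfolding lpv_def using fin by simp
    then show False using nx_props[of "lpv c"] m by auto
  qed
  then show ?thesis using m by auto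
qed

lemma lpv_unique:
  assumes "a \<in> P" "a \<le> c" "c < nx a"
  shows "lpv c = a"
proof -
  have c1: "1 \<le> c" using assms P_range by force
  have c2: "c \<le> n" using assms nx_props[OF assms(1)] by (cases "a = n") (auto simp: next_pv_def)
  note L = lpv_props[OF c1 c2]
  have "a \<le> lpv c" unfolding lpv_def using assms finite_P by (auto intro: Max_ge)
  moreover have "\<not> a < lpv c"
  proof
    assume "a < lpv c"
    then have "nx a \<le> lpv c" using nx_props[OF assms(1)] L by auto
    then show False using L assms by auto
  qed
  ultimately show ?thesis by simp
qed

lemma no_P_between: "a \<in> P \<Longrightarrow> a < m \<Longrightarrow> m < nx a \<Longrightarrow> m \<notin> P"
  using nx_props by force

lemma asc:
  assumes "is_valley D n a" "a \<le> m" "m + 1 \<le> nx a" "m + 1 \<le> n"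
  shows "m \<notin> D"
  using assms(2-4)
proof (induction m rule: dec_induct)
  case base then show ?case using assms(1) by (auto simp: is_valley_def)
next
  case (step m)
  have aP: "a \<in> P" using assms(1) by (auto simp: PV_def)
  have "Suc m \<notin> P" using no_P_between[OF aP, of "Suc m"] step by auto
  then have "\<not> is_peak D n (Suc m)" by (auto simp: PV_def)
  then show ?case using step by (auto simp: is_peak_def)
qed

lemma desc:
  assumes "is_peak D n a" "a \<le> m" "m + 1 \<le> nx a" "m + 1 \<le> n"
  shows "m \<in> D"
  using assms(2-4)
proof (induction m rule: dec_induct)
  case base then show ?case using assms(1) by (auto simp: is_peak_def)
next
  case (step m)
  have aP: "a \<in> P" using assms(1) by (auto simp: PV_def)
  have "Suc m \<notin> P" using no_P_between[OF aP, of "Suc m"] step by auto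
  then have "\<not> is_valley D n (Suc m)" by (auto simp: PV_def)
  then show ?case using step by (auto simp: is_valley_def)
qed

end


context cfg begin

lemma slope_props:
  assumes p: "1 \<le> p" "p \<le> n"
  shows "1 \<le> slope_x D n p \<and> slope_x D n p \<le> p \<and> (\<forall>j\<in>{slope_x D n p..p}. j \<in> P \<longrightarrow> j = p)
       \<and> p \<le> slope_y D n p \<and> slope_y D n p \<le> n \<and> (\<forall>j\<in>{p..slope_y D n p}. j \<in> P \<longrightarrow> j = p)"
proof -
  let ?X = "{x. 1 \<le> x \<and> x \<le> p \<and> (\<forall>j\<in>{x..p}. j \<in> P \<longrightarrow> j = p)}"
  let ?Y = "{y. p \<le> y \<and> y \<le> n \<and> (\<forall>j\<in>{p..y}. j \<in> P \<longrightarrow> j = p)}"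
  have X: "p \<in> ?X" "finite ?X" using p by auto
  have Y: "p \<in> ?Y" "finite ?Y" using p by auto
  have "Min ?X \<in> ?X" using Min_in[OF X(2)] X(1) by blast
  moreover have "Max ?Y \<in> ?Y" using Max_in[OF Y(2)] Y(1) by blast
  ultimately show ?thesis unfolding slope_x_def slope_y_def by blast
qed

lemma slope_cell:
  assumes p: "1 \<le> p" "p \<le> n" and c: "slope_x D n p \<le> c" "c \<le> slope_y D n p"
  shows "1 \<le> c \<and> c \<le> n \<and> lpv c \<le> p \<and> p \<le> nx (lpv c)"
proof -
  note S = slope_props[OF p]
  have c1: "1 \<le> c" "c \<le> n" using S c by auto
  note L = lpv_props[OF c1]
  have a: "lpv c \<le> p"
  proof (rule ccontr)
    assume "\<not> lpv c \<le> p"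
    then have "lpv c \<in> {p..slope_y D n p}" using L c by auto
    then show False using S L \<open>\<not> lpv c \<le> p\<close> by auto
  qed
  have b: "p \<le> nx (lpv c)"
  proof (rule ccontr)
    assume "\<not> p \<le> nx (lpv c)"
    then have lt: "nx (lpv c) < p" by simp
    then have "nx (lpv c) \<le> n" using p by simp
    then have "nx (lpv c) \<in> P" using nx_props[of "lpv c"] L by auto
    moreover have "nx (lpv c) \<in> {slope_x D n p..p}" using lt L c by auto
    ultimately show False using S lt by auto
  qed
  show ?thesis using a b c1 by auto
qed

context
  fixes w assumes wO: "w \<in> Omega n lam"
begin

lemma w_basic: "distinct w" "set w = {1..n}" "length w = n" "des w = D"
  using wO by (auto simp: Omega_def perm_word_def dest: distinct_card)

lemma w_step:
  assumes "1 \<le> m" "m < n"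
  shows "(m \<in> D \<longleftrightarrow> w ! m < w ! (m - 1)) \<and> w ! m \<noteq> w ! (m - 1)"
proof -
  have "m \<in> D \<longleftrightarrow> w ! m < w ! (m - 1)"
    using w_basic(3,4) assms by (auto simp: des_def)
  moreover have "w ! m \<noteq> w ! (m - 1)"
    using w_basic(1,3) assms by (auto simp: nth_eq_iff_index_eq)
  ultimately show ?thesis by blast
qed

lemma w_asc:
  assumes "is_valley D n a" "a \<le> p"
  shows "p < q \<Longrightarrow> q \<le> nx a \<Longrightarrow> q \<le> n \<Longrightarrow> w ! (p - 1) < w ! (q - 1)"
proof (induction q)
  case 0 then show ?case by simp
next
  case (Suc q)
  have p1: "1 \<le> p" using assms(1,2) by (auto simp: is_valley_def)
  have "q \<notin> D" using asc[OF assms(1), of q] Suc assms(2) p1 by auto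
  moreover have "1 \<le> q" using Suc p1 by auto
  ultimately have st: "w ! (q - 1) < w ! q" using w_step[of q] Suc by auto
  show ?case
  proof (cases "q = p")
    case True then show ?thesis using st by simp
  next
    case False then show ?thesis using Suc st by auto
  qed
qed

lemma w_desc:
  assumes "is_peak D n a" "a \<le> p"
  shows "p < q \<Longrightarrow> q \<le> nx a \<Longrightarrow> q \<le> n \<Longrightarrow> w ! (q - 1) < w ! (p - 1)"
proof (induction q)
  case 0 then show ?case by simp
next
  case (Suc q)
  have p1: "1 \<le> p" using assms(1,2) by (auto simp: is_peak_def)
  have "q \<in> D" using desc[OF assms(1), of q] Suc assms(2) p1 by auto
  moreover have "1 \<le> q" using Suc p1 by auto
  ultimately have st: "w ! q < w ! (q - 1)" using w_step[of q] Suc by auto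
  show ?case
  proof (cases "q = p")
    case True then show ?thesis using st by simp
  next
    case False then show ?thesis using Suc st by auto
  qed
qed

end
end


context cfg begin

definition Iv :: "nat \<Rightarrow> real set" where
  "Iv a = {(real a - 1) / real n <..< (real (nx a) - 1) / real n}"

definition goodpt :: "nat \<Rightarrow> real \<Rightarrow> bool" where
  "goodpt c u \<longleftrightarrow> 1 \<le> c \<and> c \<le> n \<and> real c - 1 < real n * u \<and> real n * u < real c"

lemma npos: "real n > 0" using n2 by simp

lemma Iv_iff: "u \<in> Iv a \<longleftrightarrow> real a - 1 < real n * u \<and> real n * u < real (nx a) - 1"
  using npos by (simp add: Iv_def field_simps)

lemma memb:
  assumes "goodpt c u" "a \<in> P"
  shows "u \<in> Iv a \<longleftrightarrow> a = lpv c"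
proof -
  have g: "real c - 1 < real n * u" "real n * u < real c" "1 \<le> c" "c \<le> n"
    using assms(1) by (auto simp: goodpt_def)
  have 1: "real a - 1 < real n * u \<longleftrightarrow> a \<le> c"
  proof
    assume "real a - 1 < real n * u"
    then have "real a - 1 < real c" using g by linarith
    then show "a \<le> c" by linarith
  next
    assume "a \<le> c" then show "real a - 1 < real n * u" using g by linarith
  qed
  have 2: "real n * u < real (nx a) - 1 \<longleftrightarrow> c < nx a"
  proof
    assume "real n * u < real (nx a) - 1"
    then have "real c - 1 < real (nx a) - 1" using g by linarith
    then show "c < nx a" by linarith
  next
    assume "c < nx a"
    then have "real c \<le> real (nx a) - 1" by linarith
    then show "real n * u < real (nx a) - 1" using g by linarith
  qed
  show ?thesis
    unfolding Iv_iff 1 2 using lpv_unique[OF assms(2)] lpv_props[OF g(3,4)] by auto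
qed

lemma grid_out:
  assumes "a \<in> P" "b \<in> P \<or> b = n + 1"
  shows "(real b - 1) / real n \<notin> Iv a"
proof
  assume "(real b - 1) / real n \<in> Iv a"
  then have "real a - 1 < real b - 1" "real b - 1 < real (nx a) - 1"
    using npos by (auto simp: Iv_iff)
  then have "a < b" "b < nx a" by linarith+
  then show False using assms nx_props[OF assms(1)] by auto
qed

lemma sep:
  assumes "a \<in> P" "a2 \<in> P" "a < a2" "u \<in> Iv a" "v \<in> Iv a2" "connected T"
    "u \<in> T" "v \<in> T" "T \<subseteq> (\<Union>b\<in>P. Iv b)"
  shows False
proof -
  let ?t = "(real (nx a) - 1) / real n"
  have nxa: "nx a \<le> a2" using nx_props[OF assms(1)] assms(2,3) by auto
  have "u < ?t" using assms(4) by (simp add: Iv_def)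
  moreover have "?t < v"
  proof -
    have "?t \<le> (real a2 - 1) / real n" using nxa npos by (simp add: divide_right_mono)
    also have "\<dots> < v" using assms(5) by (simp add: Iv_def)
    finally show ?thesis .
  qed
  ultimately have "?t \<in> T" using connected_contains_Ioo[OF assms(6,7,8)] by auto
  then obtain b where b: "b \<in> P" "?t \<in> Iv b" using assms(9) by auto
  have "nx a \<in> P \<or> nx a = n + 1"
    using nx_props[OF assms(1)] by (cases "nx a \<le> n") auto
  then show False using grid_out[OF b(1)] b(2) by blast
qed

lemma same_comp_iff:
  assumes Q: "\<And>a. Q a \<Longrightarrow> a \<in> P" and u: "goodpt c u" and v: "goodpt c' v"
  shows "same_comp (\<Union>a\<in>{a. Q a}. Iv a) u v \<longleftrightarrow> lpv c = lpv c' \<and> Q (lpv c)"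
proof
  assume "same_comp (\<Union>a\<in>{a. Q a}. Iv a) u v"
  then obtain T where T: "connected T" "T \<subseteq> (\<Union>a\<in>{a. Q a}. Iv a)" "u \<in> T" "v \<in> T"
    by (auto simp: same_comp_def connected_component_def)
  obtain a where a: "Q a" "u \<in> Iv a" using T by blast
  obtain a2 where a2: "Q a2" "v \<in> Iv a2" using T by blast
  have aP: "a \<in> P" "a2 \<in> P" using Q a a2 by auto
  have T': "T \<subseteq> (\<Union>b\<in>P. Iv b)" using T Q by blast
  have "a = a2"
  proof (rule ccontr)
    assume "a \<noteq> a2"
    then consider "a < a2" | "a2 < a" by linarith
    then show False
    proof cases
      case 1 show False by (rule sep[OF aP 1 a(2) a2(2) T(1,3,4) T'])
    next
      case 2 show False by (rule sep[OF aP(2,1) 2 a2(2) a(2) T(1,4,3) T'])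
    qed
  qed
  then show "lpv c = lpv c' \<and> Q (lpv c)"
    using memb[OF u aP(1)] memb[OF v aP(2)] a a2 by auto
next
  assume h: "lpv c = lpv c' \<and> Q (lpv c)"
  let ?a = "lpv c"
  have "?a \<in> P" using Q h by auto
  then have "u \<in> Iv ?a" "v \<in> Iv ?a" using memb[OF u] memb[OF v] h by auto
  moreover have "Iv ?a \<subseteq> (\<Union>a\<in>{a. Q a}. Iv a)" using h by auto
  ultimately show "same_comp (\<Union>a\<in>{a. Q a}. Iv a) u v"
    unfolding same_comp_def connected_component_def
    by (intro exI[of _ "Iv ?a"]) (auto simp: Iv_def)
qed

lemma run_paintbox_eq:
  "run_paintbox lam n = ((\<Union>a\<in>{a. is_valley D n a}. Iv a), (\<Union>a\<in>{a. is_peak D n a}. Iv a))"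
  by (simp add: run_paintbox_def Iv_def Let_def)

end


context cfg begin

definition good :: "nat list \<Rightarrow> nat \<Rightarrow> (nat \<Rightarrow> real) \<Rightarrow> bool" where
  "good w k x \<longleftrightarrow> (\<forall>i\<in>{1..k}. \<exists>c. goodpt c (x i) \<and> slope_x D n (pos w i) \<le> c \<and> c \<le> slope_y D n (pos w i))"

lemma lpv_mono: "1 \<le> c \<Longrightarrow> c \<le> c' \<Longrightarrow> c' \<le> n \<Longrightarrow> lpv c \<le> lpv c'"
  using lpv_props[of c] finite_P unfolding lpv_def[of c'] by (intro Max_ge) auto

lemma main_order:
  assumes wO: "w \<in> Omega n lam" and kn: "k \<le> n" and g: "good w k x"
    and ij: "i \<in> {1..k}" "j \<in> {1..k}"
  shows "pb_before (run_paintbox lam n) x i j \<longleftrightarrow> pos w i < pos w j"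
proof (cases "i = j")
  case True then show ?thesis by (auto simp: pb_before_def)
next
  case False
  note wb = w_basic[OF wO]
  let ?p = "pos w i" and ?q = "pos w j"
  have iw: "i \<in> set w" "j \<in> set w" using ij kn wb by auto
  have pp: "1 \<le> ?p" "?p \<le> n" "w ! (?p - 1) = i" using pos_in[OF wb(1) iw(1)] wb by auto
  have qq: "1 \<le> ?q" "?q \<le> n" "w ! (?q - 1) = j" using pos_in[OF wb(1) iw(2)] wb by auto
  have pq: "?p \<noteq> ?q" using pos_inj[OF wb(1) iw] False by auto
  obtain ci where ci: "goodpt ci (x i)" "slope_x D n ?p \<le> ci" "ci \<le> slope_y D n ?p"
    using g ij unfolding good_def by blast
  obtain cj where cj: "goodpt cj (x j)" "slope_x D n ?q \<le> cj" "cj \<le> slope_y D n ?q"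
    using g ij unfolding good_def by blast
  note si = slope_cell[OF pp(1,2) ci(2,3)]
  note sj = slope_cell[OF qq(1,2) cj(2,3)]
  define a where "a = lpv ci"
  define b where "b = lpv cj"
  have aP: "a \<in> P" and bP: "b \<in> P" using lpv_props si sj a_def b_def by auto
  have ap: "a \<le> ?p" "?p \<le> nx a" using si a_def by auto
  have bq: "b \<le> ?q" "?q \<le> nx b" using sj b_def by auto
  have sc1: "same_comp (fst (run_paintbox lam n)) (x i) (x j) \<longleftrightarrow> a = b \<and> is_valley D n a"
    unfolding run_paintbox_eq fst_conv a_def b_def
    by (rule same_comp_iff[OF _ ci(1) cj(1)]) (auto simp: PV_def)
  have sc2: "same_comp (snd (run_paintbox lam n)) (x i) (x j) \<longleftrightarrow> a = b \<and> is_peak D n a"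
    unfolding run_paintbox_eq snd_conv a_def b_def
    by (rule same_comp_iff[OF _ ci(1) cj(1)]) (auto simp: PV_def)
  have gi: "real ci - 1 < real n * x i" "real n * x i < real ci" "1 \<le> ci" "ci \<le> n"
    using ci(1) by (auto simp: goodpt_def)
  have gj: "real cj - 1 < real n * x j" "real n * x j < real cj" "1 \<le> cj" "cj \<le> n"
    using cj(1) by (auto simp: goodpt_def)
  show ?thesis
  proof (cases "a = b")
    case True
    have pn: "?p \<le> nx a" "?q \<le> nx a" "a \<le> ?q" using ap bq True by auto
    consider "is_valley D n a" | "is_peak D n a" using aP by (auto simp: PV_def)
    then show ?thesis
    proof cases
      case 1
      have nv: "\<not> is_peak D n a" using 1 not_peak_and_valley by blast
      have "?p < ?q \<longleftrightarrow> i < j"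
      proof
        assume "?p < ?q" then show "i < j"
          using w_asc[OF wO 1 ap(1), of ?q] pn pp qq by auto
      next
        assume "i < j"
        show "?p < ?q"
        proof (rule ccontr)
          assume "\<not> ?p < ?q"
          then have "?q < ?p" using pq by auto
          then show False using w_asc[OF wO 1 pn(3), of ?p] pn pp qq \<open>i < j\<close> by auto
        qed
      qed
      then show ?thesis using sc1 sc2 True 1 nv by (auto simp: pb_before_def)
    next
      case 2
      have nv: "\<not> is_valley D n a" using 2 not_peak_and_valley by blast
      have "?p < ?q \<longleftrightarrow> j < i"
      proof
        assume "?p < ?q" then show "j < i"
          using w_desc[OF wO 2 ap(1), of ?q] pn pp qq by auto
      next
        assume "j < i"
        show "?p < ?q"
        proof (rule ccontr)
          assume "\<not> ?p < ?q"
          then have "?q < ?p" using pq by auto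
          then show False using w_desc[OF wO 2 pn(3), of ?p] pn pp qq \<open>j < i\<close> by auto
        qed
      qed
      then show ?thesis using sc1 sc2 True 2 nv by (auto simp: pb_before_def)
    qed
  next
    case False
    have xx: "x i < x j \<longleftrightarrow> a < b"
    proof
      assume "x i < x j"
      then have "real n * x i < real n * x j" using npos by simp
      then have "ci \<le> cj" using gi gj by linarith
      then have "a \<le> b" using lpv_mono gi gj a_def b_def by auto
      then show "a < b" using False by simp
    next
      assume "a < b"
      then have "nx a \<le> b" using nx_props[OF aP] bP by auto
      moreover have "ci < nx a" using lpv_props[OF gi(3,4)] a_def by auto
      moreover have "b \<le> cj" using lpv_props[OF gj(3,4)] b_def by auto
      ultimately have "ci < cj" by simp
      then have "real ci \<le> real cj - 1" by linarith
      then have "real n * x i < real n * x j" using gi gj by linarith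
      then show "x i < x j" using npos by simp
    qed
    have pq2: "?p < ?q \<longleftrightarrow> a < b"
    proof
      assume h: "?p < ?q"
      show "a < b"
      proof (rule ccontr)
        assume "\<not> a < b"
        then have "b < a" using False by simp
        then have "nx b \<le> a" using nx_props[OF bP] aP by auto
        then show False using h ap bq by auto
      qed
    next
      assume "a < b"
      then have "nx a \<le> b" using nx_props[OF aP] bP by auto
      then show "?p < ?q" using pq ap bq by auto
    qed
    show ?thesis using sc1 sc2 False xx pq2 by (auto simp: pb_before_def)
  qed
qed

lemma paintbox_good:
  assumes wO: "w \<in> Omega n lam" and kn: "k \<le> n" and g: "good w k x"
  shows "paintbox (run_paintbox lam n) k x = restr k w"
  unfolding paintbox_def
proof (rule the_equality)
  have pw: "perm_word n w" using wO by (simp add: Omega_def)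
  show "perm_word k (restr k w) \<and> (\<forall>i\<in>{1..k}. \<forall>j\<in>{1..k}. pos (restr k w) i < pos (restr k w) j
          \<longleftrightarrow> pb_before (run_paintbox lam n) x i j)"
    using restr_perm[OF pw kn] restr_pos[OF pw kn] main_order[OF wO kn g] by auto
  fix w' assume h: "perm_word k w' \<and> (\<forall>i\<in>{1..k}. \<forall>j\<in>{1..k}. pos w' i < pos w' j
          \<longleftrightarrow> pb_before (run_paintbox lam n) x i j)"
  show "w' = restr k w"
    by (rule perm_word_unique) (use h restr_perm[OF pw kn] restr_pos[OF pw kn] main_order[OF wO kn g] in auto)
qed

end


lemma open_cc_pairs:
  fixes S :: "real set" assumes "open S"
  shows "open {p. connected_component S (fst p) (snd p)}"
proof -
  have "{p. connected_component S (fst p) (snd p)} =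
        (\<Union>u\<in>S. connected_component_set S u \<times> connected_component_set S u)"
  proof (intro equalityI subsetI)
    fix p assume "p \<in> {p. connected_component S (fst p) (snd p)}"
    then have h: "connected_component S (fst p) (snd p)" by simp
    then have "fst p \<in> S" using connected_component_in by blast
    moreover have "fst p \<in> connected_component_set S (fst p)"
      using \<open>fst p \<in> S\<close> by (simp add: connected_component_refl)
    ultimately show "p \<in> (\<Union>u\<in>S. connected_component_set S u \<times> connected_component_set S u)"
      using h by (intro UN_I[of "fst p"]) (auto simp: mem_Times_iff)
  next
    fix p assume "p \<in> (\<Union>u\<in>S. connected_component_set S u \<times> connected_component_set S u)"
    then obtain u where "connected_component S u (fst p)" "connected_component S u (snd p)"
      by (auto simp: mem_Times_iff)
    then show "p \<in> {p. connected_component S (fst p) (snd p)}"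
      using connected_component_sym connected_component_trans by blast
  qed
  moreover have "open (\<Union>u\<in>S. connected_component_set S u \<times> connected_component_set S u)"
    using open_connected_component[OF assms] by (intro open_UN ballI open_Times) auto
  ultimately show ?thesis by simp
qed

lemma pred_same_comp:
  fixes S :: "real set"
  assumes "open S" "f \<in> borel_measurable M" "g \<in> borel_measurable M"
  shows "Measurable.pred M (\<lambda>x. same_comp S (f x) (g x))"
proof -
  have m: "(\<lambda>x. (f x, g x)) \<in> borel_measurable M"
    using measurable_Pair[OF assms(2,3)] by (simp add: borel_prod)
  have "Measurable.pred M (\<lambda>x. (f x, g x) \<in> {p. connected_component S (fst p) (snd p)})"
    by (rule pred_sets2[OF borel_open[OF open_cc_pairs[OF assms(1)]] m])
  then show ?thesis by (simp add: same_comp_def)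
qed

lemma pred_pb:
  assumes "open (fst U)" "open (snd U)"
    "(\<lambda>x. x i) \<in> borel_measurable M" "(\<lambda>x. x j) \<in> borel_measurable M"
  shows "Measurable.pred M (\<lambda>x. pb_before U x i j)"
proof -
  have 1: "Measurable.pred M (\<lambda>x. same_comp (fst U) (x i) (x j))" by (rule pred_same_comp[OF assms(1,3,4)])
  have 2: "Measurable.pred M (\<lambda>x. same_comp (snd U) (x i) (x j))" by (rule pred_same_comp[OF assms(2,3,4)])
  have 3: "Measurable.pred M (\<lambda>x. x i < x j)" using assms(3,4) by measurable
  show ?thesis unfolding pb_before_def using 1 2 3 by measurable
qed

definition PB :: "nat \<Rightarrow> (nat \<times> nat) set \<Rightarrow> nat list" where
  "PB k R = (THE w. perm_word k w \<and> (\<forall>i\<in>{1..k}. \<forall>j\<in>{1..k}. pos w i < pos w j \<longleftrightarrow> (i, j) \<in> R))"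

lemma paintbox_PB:
  "paintbox U k x = PB k {p \<in> {1..k} \<times> {1..k}. pb_before U x (fst p) (snd p)}"
  unfolding paintbox_def PB_def by simp

lemma pred_paintbox:
  assumes "open (fst U)" "open (snd U)"
    "\<And>i. i \<in> {1..k} \<Longrightarrow> (\<lambda>x. x i) \<in> borel_measurable M"
  shows "{x \<in> space M. paintbox U k x = \<tau>} \<in> sets M"
proof -
  let ?F = "{1..k} \<times> {1..k}"
  let ?Rel = "\<lambda>x. {p \<in> ?F. pb_before U x (fst p) (snd p)}"
  have eq: "\<And>x. (paintbox U k x = \<tau>) \<longleftrightarrow> (\<exists>R\<in>{R \<in> Pow ?F. PB k R = \<tau>}. \<forall>p\<in>?F. (p \<in> R) = pb_before U x (fst p) (snd p))"
  proof -
    fix x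
    have "(\<forall>p\<in>?F. (p \<in> R) = pb_before U x (fst p) (snd p)) \<longleftrightarrow> R = ?Rel x" if "R \<subseteq> ?F" for R
      using that by auto
    then show "(paintbox U k x = \<tau>) \<longleftrightarrow> (\<exists>R\<in>{R \<in> Pow ?F. PB k R = \<tau>}. \<forall>p\<in>?F. (p \<in> R) = pb_before U x (fst p) (snd p))"
      unfolding paintbox_PB by (auto intro!: bexI[of _ "?Rel x"])
  qed
  have fin: "finite {R \<in> Pow ?F. PB k R = \<tau>}" by simp
  have pp: "Measurable.pred M (\<lambda>x. pb_before U x (fst p) (snd p))" if "p \<in> ?F" for p
    using that by (intro pred_pb assms) (auto simp: mem_Times_iff)
  have "Measurable.pred M (\<lambda>x. \<exists>R\<in>{R \<in> Pow ?F. PB k R = \<tau>}. \<forall>p\<in>?F. (p \<in> R) = pb_before U x (fst p) (snd p))"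
  proof (rule pred_intros_finite(4)[OF fin])
    fix R assume "R \<in> {R \<in> Pow ?F. PB k R = \<tau>}"
    show "Measurable.pred M (\<lambda>x. \<forall>p\<in>?F. (p \<in> R) = pb_before U x (fst p) (snd p))"
    proof (rule pred_intros_finite(3))
      show "finite ?F" by simp
      fix p assume "p \<in> ?F"
      show "Measurable.pred M (\<lambda>x. (p \<in> R) = pb_before U x (fst p) (snd p))"
        using pp[OF \<open>p \<in> ?F\<close>] by measurable
    qed
  qed
  then show ?thesis unfolding eq[symmetric] pred_def .
qed



context cfg begin

lemma good_point:
  assumes p: "1 \<le> p" "p \<le> n"
    and y: "y \<in> {(real (slope_x D n p) - 1) / real n .. real (slope_y D n p) / real n}"
    and G: "y \<notin> (\<lambda>m. real m / real n) ` {0..n}"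
  shows "\<exists>c. goodpt c y \<and> slope_x D n p \<le> c \<and> c \<le> slope_y D n p"
proof -
  note S = slope_props[OF p]
  let ?sx = "slope_x D n p" and ?sy = "slope_y D n p"
  have S1: "1 \<le> ?sx" "?sy \<le> n" using S by auto
  define t where "t = real n * y"
  have ya: "(real ?sx - 1) / real n \<le> y" "y \<le> real ?sy / real n" using y by auto
  have t1: "real ?sx - 1 \<le> t"
    using ya(1) npos unfolding t_def by (simp add: divide_le_eq mult.commute)
  have t2: "t \<le> real ?sy"
    using ya(2) npos unfolding t_def by (simp add: le_divide_eq mult.commute)
  have t0: "0 \<le> t" using t1 S1 by linarith
  define c where "c = nat \<lceil>t\<rceil>"
  have cc: "real c = of_int \<lceil>t\<rceil>" using t0 by (simp add: c_def)
  have cl: "t \<le> real c" "real c - 1 < t" using cc ceiling_correct[of t] by linarith+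
  have ne: "t \<noteq> real c"
  proof
    assume tc: "t = real c"
    then have "real c \<le> real n" using t2 S1 by linarith
    then have "c \<le> n" by simp
    moreover have "y = real c / real n" using tc npos unfolding t_def by (simp add: eq_divide_eq mult.commute)
    ultimately show False using G by auto
  qed
  have lt: "t < real c" using cl(1) ne by simp
  have "real ?sx - 1 < real c" using t1 lt by linarith
  then have c1: "?sx \<le> c" by linarith
  have "real c < real ?sy + 1" using t2 cl(2) by linarith
  then have c2: "c \<le> ?sy" by linarith
  have "goodpt c y" unfolding goodpt_def using c1 c2 S1 cl(2) lt by (simp add: t_def)
  then show ?thesis using c1 c2 by blast
qed

context
  fixes w k assumes wO: "w \<in> Omega n lam" and k1: "1 \<le> k" and kn: "k \<le> n"
begin

definition lo where "lo i = (real (slope_x D n (pos w i)) - 1) / real n"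
definition hi where "hi i = real (slope_y D n (pos w i)) / real n"

lemma xi_eq: "xi_measure n lam w k = PiM {1..k} (\<lambda>i. uniform_measure lborel {lo i .. hi i})"
  by (simp add: xi_measure_def lo_def hi_def)

lemma pos_range: "i \<in> {1..k} \<Longrightarrow> 1 \<le> pos w i \<and> pos w i \<le> n"
  using pos_in[of w i] w_basic[OF wO] kn by auto

lemma lo_hi: "i \<in> {1..k} \<Longrightarrow> lo i < hi i"
proof -
  assume i: "i \<in> {1..k}"
  have pr: "1 \<le> pos w i" "pos w i \<le> n" using pos_range[OF i] by auto
  have "slope_x D n (pos w i) \<le> slope_y D n (pos w i)" using slope_props[OF pr] by linarith
  then have "real (slope_x D n (pos w i)) - 1 < real (slope_y D n (pos w i))" by linarith
  then show "lo i < hi i" unfolding lo_def hi_def by (rule divide_strict_right_mono[OF _ npos])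
qed

lemma prob_comp: "i \<in> {1..k} \<Longrightarrow> prob_space (uniform_measure lborel {lo i .. hi i})"
proof -
  assume i: "i \<in> {1..k}"
  have "lo i \<le> hi i" "hi i - lo i > 0" using lo_hi[OF i] by auto
  then have "emeasure lborel {lo i .. hi i} = ennreal (hi i - lo i)" by simp
  then show ?thesis using \<open>hi i - lo i > 0\<close> by (intro prob_space_uniform_measure) simp_all
qed

lemma prob_xi: "prob_space (xi_measure n lam w k)"
  unfolding xi_eq by (rule prob_space_PiM) (rule prob_comp)

lemma AE_good: "AE x in xi_measure n lam w k. good w k x"
proof -
  let ?G = "(\<lambda>m. real m / real n) ` {0..n}"
  have AEG: "AE y in lborel. y \<notin> ?G"
    by (rule AE_discrete_difference) (simp_all add: countable_finite)
  have "AE x in xi_measure n lam w k. \<forall>i\<in>{1..k}.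
          \<exists>c. goodpt c (x i) \<and> slope_x D n (pos w i) \<le> c \<and> c \<le> slope_y D n (pos w i)"
  proof (subst AE_finite_all[OF finite_atLeastAtMost], intro ballI)
    fix i assume i: "i \<in> {1..k}"
    define Q where "Q = (\<lambda>y. \<exists>c. goodpt c y \<and> slope_x D n (pos w i) \<le> c \<and> c \<le> slope_y D n (pos w i))"
    have hQ: "AE y in uniform_measure lborel {lo i .. hi i}. Q y"
    proof (rule AE_uniform_measureI)
      show "{lo i..hi i} \<in> sets lborel" by simp
      have pr: "1 \<le> pos w i" "pos w i \<le> n" using pos_range[OF i] by auto
      show "AE y in lborel. y \<in> {lo i..hi i} \<longrightarrow> Q y"
        using AEG
      proof (rule eventually_mono)
        fix y assume "y \<notin> ?G"
        then show "y \<in> {lo i..hi i} \<longrightarrow> Q y"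
          using good_point[OF pr, of y] unfolding lo_def hi_def Q_def by blast
      qed
    qed
    have "AE x in PiM {1..k} (\<lambda>i. uniform_measure lborel {lo i .. hi i}). Q (x i)"
      apply (rule AE_PiM_component)
        apply (erule prob_comp)
       apply (rule i)
      by (rule hQ)
    then show "AE x in xi_measure n lam w k.
            \<exists>c. goodpt c (x i) \<and> slope_x D n (pos w i) \<le> c \<and> c \<le> slope_y D n (pos w i)"
      unfolding xi_eq Q_def .
  qed
  then show ?thesis by (simp add: good_def)
qed

lemma AE_paintbox: "AE x in xi_measure n lam w k. paintbox (run_paintbox lam n) k x = restr k w"
  using AE_good by (rule eventually_mono) (rule paintbox_good[OF wO kn], assumption)

lemma sets_paintbox:
  "{x \<in> space (xi_measure n lam w k). paintbox (run_paintbox lam n) k x = \<tau>} \<in> sets (xi_measure n lam w k)"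
proof (rule pred_paintbox)
  show "open (fst (run_paintbox lam n))" "open (snd (run_paintbox lam n))"
    unfolding run_paintbox_eq fst_conv snd_conv Iv_def by (intro open_UN ballI open_greaterThanLessThan)+
  fix i assume i: "i \<in> {1..k}"
  have "(\<lambda>x. x i) \<in> measurable (xi_measure n lam w k) (uniform_measure lborel {lo i .. hi i})"
    unfolding xi_eq using i by (rule measurable_component_singleton)
  then show "(\<lambda>x. x i) \<in> borel_measurable (xi_measure n lam w k)"
    using measurable_cong_sets[OF refl, of "uniform_measure lborel {lo i .. hi i}" borel "xi_measure n lam w k"] by simp
qed

lemma measure_term:
  "measure (xi_measure n lam w k) {x \<in> space (xi_measure n lam w k). paintbox (run_paintbox lam n) k x = \<tau>}
   = (if restr k w = \<tau> then 1 else 0)"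
proof -
  interpret X: prob_space "xi_measure n lam w k" by (rule prob_xi)
  let ?A = "{x \<in> space (xi_measure n lam w k). paintbox (run_paintbox lam n) k x = \<tau>}"
  show ?thesis
  proof (cases "restr k w = \<tau>")
    case True
    have "AE x in xi_measure n lam w k. x \<in> ?A"
    proof -
      have "AE x in xi_measure n lam w k. x \<in> space (xi_measure n lam w k) \<and> paintbox (run_paintbox lam n) k x = restr k w"
        using AE_space AE_paintbox by (rule eventually_conj)
      then show ?thesis by (rule eventually_mono) (use True in simp)
    qed
    then have "measure (xi_measure n lam w k) ?A = 1"
      using X.prob_eq_1[OF sets_paintbox[of \<tau>]] by blast
    then show ?thesis using True by simp
  next
    case False
    have "AE x in xi_measure n lam w k. \<not> paintbox (run_paintbox lam n) k x = \<tau>"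
      using AE_paintbox by (rule eventually_mono) (use False in simp)
    then have "measure (xi_measure n lam w k) ?A = 0"
      by (rule X.prob_eq_0_AE)
    then show ?thesis using False by simp
  qed
qed

end
end

theorem proposition12:
  fixes lam :: "nat list" and n k :: nat
  assumes "\<forall>p\<in>set lam. 0 < p" and "sum_list lam = n" and "2 \<le> n"
    and "1 \<le> k" and "k \<le> n"
  shows "(\<forall>w\<in>Omega n lam.
            AE x in xi_measure n lam w k. paintbox (run_paintbox lam n) k x = restr k w)
       \<and> (\<forall>\<tau>. measure_pmf.prob (pmf_of_set (Omega n lam)) {w. restr k w = \<tau>}
              = (\<Sum>w\<in>Omega n lam.
                   measure (xi_measure n lam w k)
                     {x \<in> space (xi_measure n lam w k).
                        paintbox (run_paintbox lam n) k x = \<tau>}) / real (card (Omega n lam)))"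
proof -
  interpret cfg lam n using assms(1-3) by unfold_locales
  have fin: "finite (Omega n lam)"
  proof (rule finite_subset)
    show "Omega n lam \<subseteq> {w. set w \<subseteq> {1..n} \<and> length w = n}"
      by (auto simp: Omega_def perm_word_def dest: distinct_card)
    show "finite {w. set w \<subseteq> {1..n} \<and> length w = n}"
      by (rule finite_lists_length_eq) simp
  qed
  have ne: "Omega n lam \<noteq> {}"
  proof -
    have "cw lam \<in> Omega n lam"
      using cw_perm[of lam] des_cw[OF assms(1)] assms(2) by (simp add: Omega_def)
    then show ?thesis by blast
  qed
  have P1: "\<forall>w\<in>Omega n lam.
            AE x in xi_measure n lam w k. paintbox (run_paintbox lam n) k x = restr k w"
    using AE_paintbox[OF _ assms(4,5)] by blast
  have P2: "measure_pmf.prob (pmf_of_set (Omega n lam)) {w. restr k w = \<tau>}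
              = (\<Sum>w\<in>Omega n lam.
                   measure (xi_measure n lam w k)
                     {x \<in> space (xi_measure n lam w k).
                        paintbox (run_paintbox lam n) k x = \<tau>}) / real (card (Omega n lam))" for \<tau>
  proof -
    have "(\<Sum>w\<in>Omega n lam. measure (xi_measure n lam w k)
                     {x \<in> space (xi_measure n lam w k). paintbox (run_paintbox lam n) k x = \<tau>})
          = (\<Sum>w\<in>Omega n lam. if restr k w = \<tau> then 1 else 0)"
      using measure_term[OF _ assms(4,5)] by (intro sum.cong) auto
    also have "\<dots> = real (card (Omega n lam \<inter> {w. restr k w = \<tau>}))"
      using fin by (simp add: sum.If_cases Int_def)
    finally show ?thesis using measure_pmf_of_set[OF ne fin] by simp
  qed
  show ?thesis using P1 P2 by blast
qed

end
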